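(* Let $(Y_0,Y_1,D,I_0)$ be observed, where $D\in\{0,1\}$ is a treatment received between a baseline period $0$ and a follow-up period $1$, and let $(Y_1(0),Y_1(1))$ be latent potential outcomes, with $$Y_0=Y_0(0),\qquad Y_1=Y_1(1)D+Y_1(0)(1-D).$$ Let $I_0$ take values in a baseline information set $\mathcal I_0$. Define $$\theta_{OLS}=\mathbb E[Y_1\mid D=1]-\mathbb E[Y_1\mid D=0],\qquad SB_1=\mathbb E[Y_1(0)\mid D=1]-\mathbb E[Y_1(0)\mid D=0],$$ and for $\iota_0\in\mathcal I_0$, $$SB_0(\iota_0)=\mathbb E[Y_0\mid D=1,I_0=\iota_0]-\mathbb E[Y_0\mid D=0,I_0=\iota_0].$$ Assume (bias set stability) that $$SB_1\in\Big[\inf_{\iota_0\in\mathcal I_0}SB_0(\iota_0),\ \sup_{\iota_0\in\mathcal I_0}SB_0(\iota_0)\Big].$$ Then the average treatment effect on the treated $ATT=\mathbb E[Y_1(1)-Y_1(0)\mid D=1]$ satisfies $$ATT\in\Big[\theta_{OLS}-\sup_{\iota_0\in\mathcal I_0}SB_0(\iota_0),\ \theta_{OLS}-\inf_{\iota_0\in\mathcal I_0}SB_0(\iota_0)\Big]\equiv\Theta_I .$$ Moreover these bounds are sharp: $\Theta_I$ is the identified set for $ATT$, i.e. every value in $\Theta_I$ is the ATT of some joint distribution of the latent and observed variables that is consistent with the distribution of the observed data, the model, and the bias set stability assumption.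
   Context: All conditional expectations are assumed to exist. The information set $\mathcal I_0$ may consist, e.g., of pre-treatment periods, values of baseline covariates, or data sources; $SB_0(\iota_0)$ is the baseline-period "selection bias" associated with the piece of information $\iota_0$. *)

theory Defs
  imports "HOL-Probability.Probability"
begin

definition cexp :: "'a measure \<Rightarrow> ('a \<Rightarrow> real) \<Rightarrow> 'a set \<Rightarrow> real" where
  "cexp M X A = (\<integral>\<omega>. indicator A \<omega> * X \<omega> \<partial>M) / measure M A"

definition evD :: "'a measure \<Rightarrow> ('a \<Rightarrow> real) \<Rightarrow> real \<Rightarrow> 'a set" where
  "evD M D d = {\<omega> \<in> space M. D \<omega> = d}"

definition evDI :: "'a measure \<Rightarrow> ('a \<Rightarrow> real) \<Rightarrow> ('a \<Rightarrow> 'i) \<Rightarrow> real \<Rightarrow> 'i \<Rightarrow> 'a set" where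
  "evDI M D I0 d \<iota> = {\<omega> \<in> space M. D \<omega> = d \<and> I0 \<omega> = \<iota>}"

definition theta_OLS :: "'a measure \<Rightarrow> ('a \<Rightarrow> real) \<Rightarrow> ('a \<Rightarrow> real) \<Rightarrow> real" where
  "theta_OLS M Y1 D = cexp M Y1 (evD M D 1) - cexp M Y1 (evD M D 0)"

definition SB1 :: "'a measure \<Rightarrow> ('a \<Rightarrow> real) \<Rightarrow> ('a \<Rightarrow> real) \<Rightarrow> real" where
  "SB1 M Y1_0 D = cexp M Y1_0 (evD M D 1) - cexp M Y1_0 (evD M D 0)"

definition SB0 :: "'a measure \<Rightarrow> ('a \<Rightarrow> real) \<Rightarrow> ('a \<Rightarrow> real) \<Rightarrow> ('a \<Rightarrow> 'i) \<Rightarrow> 'i \<Rightarrow> real" where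
  "SB0 M Y0 D I0 \<iota> = cexp M Y0 (evDI M D I0 1 \<iota>) - cexp M Y0 (evDI M D I0 0 \<iota>)"

definition ATT :: "'a measure \<Rightarrow> ('a \<Rightarrow> real) \<Rightarrow> ('a \<Rightarrow> real) \<Rightarrow> ('a \<Rightarrow> real) \<Rightarrow> real" where
  "ATT M Y1_0 Y1_1 D = cexp M (\<lambda>\<omega>. Y1_1 \<omega> - Y1_0 \<omega>) (evD M D 1)"

text \<open>Bias set stability. Inf/Sup are taken in the extended reals, so that
  an unbounded SB0 is handled correctly.\<close>
definition BSS :: "'a measure \<Rightarrow> ('a \<Rightarrow> real) \<Rightarrow> ('a \<Rightarrow> real) \<Rightarrow> ('a \<Rightarrow> real) \<Rightarrow> ('a \<Rightarrow> 'i) \<Rightarrow> 'i set \<Rightarrow> bool" where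
  "BSS M Y0 Y1_0 D I0 \<I>0 \<longleftrightarrow>
     (INF \<iota>\<in>\<I>0. ereal (SB0 M Y0 D I0 \<iota>)) \<le> ereal (SB1 M Y1_0 D) \<and>
     ereal (SB1 M Y1_0 D) \<le> (SUP \<iota>\<in>\<I>0. ereal (SB0 M Y0 D I0 \<iota>))"

definition Theta_I :: "'a measure \<Rightarrow> ('a \<Rightarrow> real) \<Rightarrow> ('a \<Rightarrow> real) \<Rightarrow> ('a \<Rightarrow> real) \<Rightarrow> ('a \<Rightarrow> 'i) \<Rightarrow> 'i set \<Rightarrow> real set" where
  "Theta_I M Y0 Y1 D I0 \<I>0 =
     {\<theta>. ereal (theta_OLS M Y1 D) - (SUP \<iota>\<in>\<I>0. ereal (SB0 M Y0 D I0 \<iota>)) \<le> ereal \<theta> \<and>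
          ereal \<theta> \<le> ereal (theta_OLS M Y1 D) - (INF \<iota>\<in>\<I>0. ereal (SB0 M Y0 D I0 \<iota>))}"

text \<open>Y0 = Y0(0) is a mere naming convention.\<close>
definition did_model :: "'a measure \<Rightarrow> 'i measure \<Rightarrow> ('a \<Rightarrow> real) \<Rightarrow> ('a \<Rightarrow> real) \<Rightarrow> ('a \<Rightarrow> real)
     \<Rightarrow> ('a \<Rightarrow> 'i) \<Rightarrow> ('a \<Rightarrow> real) \<Rightarrow> ('a \<Rightarrow> real) \<Rightarrow> 'i set \<Rightarrow> bool" where
  "did_model M MI Y0 Y1 D I0 Y1_0 Y1_1 \<I>0 \<longleftrightarrow>
     prob_space M \<and>
     Y0 \<in> borel_measurable M \<and> Y1 \<in> borel_measurable M \<and> D \<in> borel_measurable M \<and>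
     Y1_0 \<in> borel_measurable M \<and> Y1_1 \<in> borel_measurable M \<and> I0 \<in> measurable M MI \<and>
     (\<forall>\<iota>\<in>\<I>0. {\<iota>} \<in> sets MI) \<and>
     (AE \<omega> in M. D \<omega> \<in> {0, 1}) \<and>
     (AE \<omega> in M. I0 \<omega> \<in> \<I>0) \<and>
     (AE \<omega> in M. Y1 \<omega> = Y1_1 \<omega> * D \<omega> + Y1_0 \<omega> * (1 - D \<omega>)) \<and>
     measure M (evD M D 1) > 0 \<and> measure M (evD M D 0) > 0 \<and>
     (\<forall>\<iota>\<in>\<I>0. \<forall>d\<in>{0, 1}. measure M (evDI M D I0 d \<iota>) > 0) \<and>
     integrable M Y1 \<and> integrable M Y1_0 \<and>
     set_integrable M (evD M D 1) (\<lambda>\<omega>. Y1_1 \<omega>) \<and>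
     (\<forall>\<iota>\<in>\<I>0. \<forall>d\<in>{0, 1}. set_integrable M (evDI M D I0 d \<iota>) (\<lambda>\<omega>. Y0 \<omega>))"

definition obs_space :: "'i measure \<Rightarrow> (real \<times> real \<times> real \<times> 'i) measure" where
  "obs_space MI = borel \<Otimes>\<^sub>M borel \<Otimes>\<^sub>M borel \<Otimes>\<^sub>M MI"

definition joint_space :: "'i measure \<Rightarrow> ((real \<times> real \<times> real \<times> 'i) \<times> (real \<times> real)) measure" where
  "joint_space MI = obs_space MI \<Otimes>\<^sub>M (borel \<Otimes>\<^sub>M borel)"

definition pY0 :: "(real \<times> real \<times> real \<times> 'i) \<times> (real \<times> real) \<Rightarrow> real" where
  "pY0 z = fst (fst z)"
definition pY1 :: "(real \<times> real \<times> real \<times> 'i) \<times> (real \<times> real) \<Rightarrow> real" where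
  "pY1 z = fst (snd (fst z))"
definition pD :: "(real \<times> real \<times> real \<times> 'i) \<times> (real \<times> real) \<Rightarrow> real" where
  "pD z = fst (snd (snd (fst z)))"
definition pI0 :: "(real \<times> real \<times> real \<times> 'i) \<times> (real \<times> real) \<Rightarrow> 'i" where
  "pI0 z = snd (snd (snd (fst z)))"
definition pY1_0 :: "(real \<times> real \<times> real \<times> 'i) \<times> (real \<times> real) \<Rightarrow> real" where
  "pY1_0 z = fst (snd z)"
definition pY1_1 :: "(real \<times> real \<times> real \<times> 'i) \<times> (real \<times> real) \<Rightarrow> real" where
  "pY1_1 z = snd (snd z)"

end

theory Submission
  imports Defs
begin


lemma evD_sets: "D \<in> borel_measurable M \<Longrightarrow> evD M D d \<in> sets M"
  unfolding evD_def by measurable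

lemma evDI_sets: "D \<in> borel_measurable M \<Longrightarrow> I0 \<in> measurable M MI \<Longrightarrow> {\<iota>} \<in> sets MI
   \<Longrightarrow> evDI M D I0 d \<iota> \<in> sets M"
proof -
  assume a: "D \<in> borel_measurable M" "I0 \<in> measurable M MI" "{\<iota>} \<in> sets MI"
  have "evDI M D I0 d \<iota> = {\<omega> \<in> space M. D \<omega> = d} \<inter> (I0 -` {\<iota>} \<inter> space M)"
    unfolding evDI_def by auto
  also have "\<dots> \<in> sets M" using a
    by (intro sets.Int measurable_sets[OF a(2) a(3)]) measurable
  finally show ?thesis .
qed

lemma ereal_part1:
  fixes a b :: real and I S :: ereal
  assumes "I \<le> ereal b" "ereal b \<le> S"
  shows "ereal a - S \<le> ereal (a - b) \<and> ereal (a - b) \<le> ereal a - I"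
  using assms by (cases S; cases I) auto

lemma ereal_part2:
  fixes a t :: real and I S :: ereal
  assumes "ereal a - S \<le> ereal t" "ereal t \<le> ereal a - I"
  shows "I \<le> ereal (a - t) \<and> ereal (a - t) \<le> S"
  using assms by (cases S; cases I) auto

lemma part1:
  assumes model: "did_model M MI Y0 Y1 D I0 Y1_0 Y1_1 \<I>0"
    and bss: "BSS M Y0 Y1_0 D I0 \<I>0"
  shows "ATT M Y1_0 Y1_1 D \<in> Theta_I M Y0 Y1 D I0 \<I>0"
proof -
  note m = model[unfolded did_model_def]
  have [measurable]: "Y1 \<in> borel_measurable M" "D \<in> borel_measurable M"
    "Y1_0 \<in> borel_measurable M" "Y1_1 \<in> borel_measurable M" using m by auto
  define E1 where "E1 = evD M D 1"
  define E0 where "E0 = evD M D 0"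
  have [measurable]: "E1 \<in> sets M" "E0 \<in> sets M" unfolding E1_def E0_def by (auto intro: evD_sets)
  have ae: "AE \<omega> in M. Y1 \<omega> = Y1_1 \<omega> * D \<omega> + Y1_0 \<omega> * (1 - D \<omega>)" using m by auto
  have i1: "(\<integral>\<omega>. indicator E1 \<omega> * Y1 \<omega> \<partial>M) = (\<integral>\<omega>. indicator E1 \<omega> * Y1_1 \<omega> \<partial>M)"
    by (rule integral_cong_AE) (measurable, use ae in \<open>auto simp: E1_def evD_def split: split_indicator elim!: AE_mp\<close>)
  have i0: "(\<integral>\<omega>. indicator E0 \<omega> * Y1 \<omega> \<partial>M) = (\<integral>\<omega>. indicator E0 \<omega> * Y1_0 \<omega> \<partial>M)"
    by (rule integral_cong_AE) (measurable, use ae in \<open>auto simp: E0_def evD_def split: split_indicator elim!: AE_mp\<close>)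
  have int1: "integrable M (\<lambda>\<omega>. indicator E1 \<omega> * Y1_1 \<omega>)"
    using m unfolding set_integrable_def E1_def by auto
  have int2: "integrable M (\<lambda>\<omega>. indicator E1 \<omega> * Y1_0 \<omega>)"
    using integrable_mult_indicator[of E1 M Y1_0] m by auto
  have "(\<integral>\<omega>. indicator E1 \<omega> * (Y1_1 \<omega> - Y1_0 \<omega>) \<partial>M)
      = (\<integral>\<omega>. indicator E1 \<omega> * Y1_1 \<omega> \<partial>M) - (\<integral>\<omega>. indicator E1 \<omega> * Y1_0 \<omega> \<partial>M)"
    using Bochner_Integration.integral_diff[OF int1 int2] by (simp add: algebra_simps)
  then have "ATT M Y1_0 Y1_1 D = theta_OLS M Y1 D - SB1 M Y1_0 D"
    unfolding ATT_def theta_OLS_def SB1_def cexp_def E1_def[symmetric] E0_def[symmetric] i1 i0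
    by (simp add: diff_divide_distrib)
  then show ?thesis using bss ereal_part1 unfolding BSS_def Theta_I_def by auto
qed



lemma cexp_distr:
  assumes h: "h \<in> measurable M N" and f: "f \<in> borel_measurable N" and B: "B \<in> sets N"
  shows "cexp (distr M N h) f B = cexp M (\<lambda>\<omega>. f (h \<omega>)) (h -` B \<inter> space M)"
proof -
  have "(\<integral>z. indicator B z * f z \<partial>distr M N h) = (\<integral>\<omega>. indicator B (h \<omega>) * f (h \<omega>) \<partial>M)"
    using f B by (intro integral_distr[OF h] borel_measurable_times borel_measurable_indicator)
  also have "\<dots> = (\<integral>\<omega>. indicator (h -` B \<inter> space M) \<omega> * f (h \<omega>) \<partial>M)"
    by (intro Bochner_Integration.integral_cong) (auto split: split_indicator)
  finally show ?thesis unfolding cexp_def using measure_distr[OF h B] by simp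
qed

lemma set_integrable_distr:
  fixes f :: "_ \<Rightarrow> real"
  assumes h: "h \<in> measurable M N" and f: "f \<in> borel_measurable N" and B: "B \<in> sets N"
  shows "set_integrable (distr M N h) B f \<longleftrightarrow> set_integrable M (h -` B \<inter> space M) (\<lambda>\<omega>. f (h \<omega>))"
proof -
  have "set_integrable (distr M N h) B f \<longleftrightarrow> integrable M (\<lambda>\<omega>. indicator B (h \<omega>) * f (h \<omega>))"
    unfolding set_integrable_def using f B
    by (simp, intro integrable_distr_eq[OF h] borel_measurable_times borel_measurable_indicator)
  also have "\<dots> \<longleftrightarrow> set_integrable M (h -` B \<inter> space M) (\<lambda>\<omega>. f (h \<omega>))"
    unfolding set_integrable_def real_scaleR_def
    by (rule Bochner_Integration.integrable_cong[OF refl]) (auto split: split_indicator)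
  finally show ?thesis .
qed

lemma meas_proj[measurable]:
  "pY0 \<in> borel_measurable (joint_space MI)" "pY1 \<in> borel_measurable (joint_space MI)"
  "pD \<in> borel_measurable (joint_space MI)" "pI0 \<in> measurable (joint_space MI) MI"
  "pY1_0 \<in> borel_measurable (joint_space MI)" "pY1_1 \<in> borel_measurable (joint_space MI)"
  unfolding pY0_def pY1_def pD_def pI0_def pY1_0_def pY1_1_def joint_space_def obs_space_def
  by measurable

lemma I0_countable:
  assumes model: "did_model M MI Y0 Y1 D I0 Y1_0 Y1_1 \<I>0"
  shows "countable \<I>0"
proof -
  note m = model[unfolded did_model_def]
  interpret P: prob_space M using m by auto
  have I[measurable]: "I0 \<in> measurable M MI" and [measurable]: "D \<in> borel_measurable M" using m by auto
  interpret Q: prob_space "distr M MI I0"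
    by (rule P.prob_space_distr[OF I])
  have "\<I>0 \<subseteq> {x. measure (distr M MI I0) {x} \<noteq> 0}"
  proof
    fix \<iota> assume i: "\<iota> \<in> \<I>0"
    then have s: "{\<iota>} \<in> sets MI" using m by auto
    have "0 < measure M (evDI M D I0 1 \<iota>)" using m i by auto
    also have "\<dots> \<le> measure M (I0 -` {\<iota>} \<inter> space M)"
      by (rule P.finite_measure_mono) (auto simp: evDI_def intro: measurable_sets[OF I s])
    also have "\<dots> = measure (distr M MI I0) {\<iota>}" using measure_distr[OF I s] by simp
    finally show "\<iota> \<in> {x. measure (distr M MI I0) {x} \<noteq> 0}" by simp
  qed
  then show ?thesis using Q.countable_support countable_subset by blast
qed



lemma part2:
  assumes model: "did_model M MI Y0 Y1 D I0 Y1_0 Y1_1 \<I>0"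
    and th: "\<theta> \<in> Theta_I M Y0 Y1 D I0 \<I>0"
  shows "\<exists>N. sets N = sets (joint_space MI) \<and>
           did_model N MI pY0 pY1 pD pI0 pY1_0 pY1_1 \<I>0 \<and>
           distr N (obs_space MI) fst = distr M (obs_space MI) (\<lambda>\<omega>. (Y0 \<omega>, Y1 \<omega>, D \<omega>, I0 \<omega>)) \<and>
           BSS N pY0 pY1_0 pD pI0 \<I>0 \<and>
           ATT N pY1_0 pY1_1 pD = \<theta>"
proof -
  note m = model[unfolded did_model_def]
  interpret P: prob_space M using m by auto
  have [measurable]: "Y0 \<in> borel_measurable M" "Y1 \<in> borel_measurable M" "D \<in> borel_measurable M"
    "I0 \<in> measurable M MI" using m by auto
  have cI: "countable \<I>0" by (rule I0_countable[OF model])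
  define E1 where "E1 = evD M D 1"
  define E0 where "E0 = evD M D 0"
  have [measurable]: "E1 \<in> sets M" "E0 \<in> sets M" unfolding E1_def E0_def by (auto intro: evD_sets)
  define c where "c = (theta_OLS M Y1 D - \<theta>) + cexp M Y1 E0"
  define h where "h = (\<lambda>\<omega>. ((Y0 \<omega>, Y1 \<omega>, D \<omega>, I0 \<omega>), (if D \<omega> = 1 then c else Y1 \<omega>, Y1 \<omega>)))"
  define J where "J = joint_space MI"
  have h[measurable]: "h \<in> measurable M J"
    unfolding h_def J_def joint_space_def obs_space_def by measurable
  define N where "N = distr M J h"
  have sN: "sets N = sets J" and spN: "space N = space J" unfolding N_def by auto
  have mN: "measurable N X = measurable J X" for X by (rule measurable_cong_sets[OF sN refl])
  have hsp: "\<omega> \<in> space M \<Longrightarrow> h \<omega> \<in> space J" for \<omega> using measurable_space[OF h] by auto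
  have pDh: "pD (h \<omega>) = D \<omega>" and pI0h: "pI0 (h \<omega>) = I0 \<omega>" for \<omega>
    by (auto simp: h_def pD_def pI0_def)
  have pre_evD: "h -` evD N pD d \<inter> space M = evD M D d" for d
    unfolding evD_def spN using hsp by (auto simp: pDh)
  have pre_evDI: "h -` evDI N pD pI0 d \<iota> \<inter> space M = evDI M D I0 d \<iota>" for d \<iota>
    unfolding evDI_def spN using hsp by (auto simp: pDh pI0h)
  have evD_N: "evD N pD d \<in> sets J" for d
    using evD_sets[of pD N d] meas_proj(3)[of MI] unfolding mN sN J_def by auto
  have evDI_N: "\<iota> \<in> \<I>0 \<Longrightarrow> evDI N pD pI0 d \<iota> \<in> sets J" for d \<iota>
    using evDI_sets[of pD N pI0 MI \<iota> d] meas_proj(3,4)[of MI] m unfolding mN sN J_def by auto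
  have [measurable]: "pY0 \<in> borel_measurable J" "pY1 \<in> borel_measurable J"
    "pD \<in> borel_measurable J" "pI0 \<in> measurable J MI"
    "pY1_0 \<in> borel_measurable J" "pY1_1 \<in> borel_measurable J" unfolding J_def by measurable
  note cexpN = cexp_distr[OF h, folded N_def]
    have SB0_eq: "\<iota> \<in> \<I>0 \<Longrightarrow> SB0 N pY0 pD pI0 \<iota> = SB0 M Y0 D I0 \<iota>" for \<iota>
    unfolding SB0_def using cexpN[OF _ evDI_N] pre_evDI by (simp add: h_def pY0_def)
  have OLS_eq: "theta_OLS N pY1 pD = theta_OLS M Y1 D"
    unfolding theta_OLS_def using cexpN[OF _ evD_N] pre_evD by (simp add: h_def pY1_def)
  have P1: "measure M E1 > 0" using m E1_def by auto
  have c1: "cexp N pY1_0 (evD N pD 1) = c"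
  proof -
    have "cexp N pY1_0 (evD N pD 1) = cexp M (\<lambda>\<omega>. if D \<omega> = 1 then c else Y1 \<omega>) E1"
      using cexpN[OF _ evD_N] pre_evD by (simp add: h_def pY1_0_def E1_def)
    also have "(\<integral>\<omega>. indicator E1 \<omega> * (if D \<omega> = 1 then c else Y1 \<omega>) \<partial>M) = (\<integral>\<omega>. c * indicator E1 \<omega> \<partial>M)"
      by (intro Bochner_Integration.integral_cong) (auto simp: E1_def evD_def split: split_indicator)
    then have "cexp M (\<lambda>\<omega>. if D \<omega> = 1 then c else Y1 \<omega>) E1 = c"
      unfolding cexp_def using P1 by simp
    finally show ?thesis .
  qed
  have c0: "cexp N pY1_0 (evD N pD 0) = cexp M Y1 E0"
  proof -
    have "cexp N pY1_0 (evD N pD 0) = cexp M (\<lambda>\<omega>. if D \<omega> = 1 then c else Y1 \<omega>) E0"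
      using cexpN[OF _ evD_N] pre_evD by (simp add: h_def pY1_0_def E0_def)
    also have "(\<integral>\<omega>. indicator E0 \<omega> * (if D \<omega> = 1 then c else Y1 \<omega>) \<partial>M) = (\<integral>\<omega>. indicator E0 \<omega> * Y1 \<omega> \<partial>M)"
      by (intro Bochner_Integration.integral_cong) (auto simp: E0_def evD_def split: split_indicator)
    then have "cexp M (\<lambda>\<omega>. if D \<omega> = 1 then c else Y1 \<omega>) E0 = cexp M Y1 E0"
      unfolding cexp_def by simp
    finally show ?thesis .
  qed
  have SB1_eq: "SB1 N pY1_0 pD = theta_OLS M Y1 D - \<theta>"
    unfolding SB1_def c1 c0 c_def by simp
  have ATT_eq: "ATT N pY1_0 pY1_1 pD = \<theta>"
  proof -
    have a1: "ATT N pY1_0 pY1_1 pD = cexp M (\<lambda>\<omega>. Y1 \<omega> - (if D \<omega> = 1 then c else Y1 \<omega>)) E1"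
    proof -
      have mm: "(\<lambda>z. pY1_1 z - pY1_0 z) \<in> borel_measurable J" by measurable
      show ?thesis unfolding ATT_def using cexpN[OF mm evD_N] pre_evD
        by (simp add: h_def pY1_0_def pY1_1_def E1_def)
    qed
    have "(\<integral>\<omega>. indicator E1 \<omega> * (Y1 \<omega> - (if D \<omega> = 1 then c else Y1 \<omega>)) \<partial>M)
       = (\<integral>\<omega>. indicator E1 \<omega> * Y1 \<omega> - c * indicator E1 \<omega> \<partial>M)"
      by (intro Bochner_Integration.integral_cong) (auto simp: E1_def evD_def split: split_indicator)
    also have "\<dots> = (\<integral>\<omega>. indicator E1 \<omega> * Y1 \<omega> \<partial>M) - c * measure M E1"
    proof -
      have "integrable M (\<lambda>\<omega>. indicator E1 \<omega> * Y1 \<omega>)"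
        using integrable_mult_indicator[of E1 M Y1] m by auto
      moreover have "integrable M (\<lambda>\<omega>. c * indicator E1 \<omega>)"
        by (intro integrable_mult_right) (simp add: P.emeasure_eq_measure)
      ultimately show ?thesis by (simp add: Bochner_Integration.integral_diff)
    qed
    finally have "ATT N pY1_0 pY1_1 pD = cexp M Y1 E1 - c"
      unfolding a1 cexp_def using P1 by (simp add: diff_divide_distrib)
    then show ?thesis unfolding c_def theta_OLS_def E1_def E0_def by simp
  qed
  have BSS_N: "BSS N pY0 pY1_0 pD pI0 \<I>0"
  proof -
    have eqS: "(SUP \<iota>\<in>\<I>0. ereal (SB0 N pY0 pD pI0 \<iota>)) = (SUP \<iota>\<in>\<I>0. ereal (SB0 M Y0 D I0 \<iota>))"
      using SB0_eq by (intro SUP_cong) auto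
    have eqI: "(INF \<iota>\<in>\<I>0. ereal (SB0 N pY0 pD pI0 \<iota>)) = (INF \<iota>\<in>\<I>0. ereal (SB0 M Y0 D I0 \<iota>))"
      using SB0_eq by (intro INF_cong) auto
    show ?thesis unfolding BSS_def eqS eqI SB1_eq
      using th ereal_part2 unfolding Theta_I_def by auto
  qed
  have distr_eq: "distr N (obs_space MI) fst = distr M (obs_space MI) (\<lambda>\<omega>. (Y0 \<omega>, Y1 \<omega>, D \<omega>, I0 \<omega>))"
  proof -
    have f: "fst \<in> measurable J (obs_space MI)" unfolding J_def joint_space_def by measurable
    show ?thesis unfolding N_def distr_distr[OF f h] by (simp add: comp_def h_def)
  qed
  have model_N: "did_model N MI pY0 pY1 pD pI0 pY1_0 pY1_1 \<I>0"
    unfolding did_model_def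
  proof (intro conjI)
    show "prob_space N" unfolding N_def by (rule P.prob_space_distr[OF h])
    show "pY0 \<in> borel_measurable N" "pY1 \<in> borel_measurable N" "pD \<in> borel_measurable N"
      "pY1_0 \<in> borel_measurable N" "pY1_1 \<in> borel_measurable N" "pI0 \<in> measurable N MI"
      unfolding mN by measurable
    show "\<forall>\<iota>\<in>\<I>0. {\<iota>} \<in> sets MI" using m by auto
    have "{z \<in> space J. pD z \<in> {0, 1}} \<in> sets J" by measurable
    moreover have "AE \<omega> in M. D \<omega> \<in> {0, 1}" using m by auto
    ultimately show "AE z in N. pD z \<in> {0, 1}"
      unfolding N_def by (subst AE_distr_iff[OF h]) (auto simp: pDh)
    have "{z \<in> space J. pI0 z \<in> \<I>0} = (\<Union>\<iota>\<in>\<I>0. pI0 -` {\<iota>} \<inter> space J)" by auto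
    also have "\<dots> \<in> sets J"
      using m by (intro sets.countable_UN''[OF cI] measurable_sets[of pI0 J MI]) auto
    finally have "{z \<in> space J. pI0 z \<in> \<I>0} \<in> sets J" .
    moreover have "AE \<omega> in M. I0 \<omega> \<in> \<I>0" using m by auto
    ultimately show "AE z in N. pI0 z \<in> \<I>0"
      unfolding N_def by (subst AE_distr_iff[OF h]) (auto simp: pI0h)
    have "{z \<in> space J. pY1 z = pY1_1 z * pD z + pY1_0 z * (1 - pD z)} \<in> sets J" by measurable
    moreover have "AE \<omega> in M. D \<omega> \<in> {0, 1}" using m by auto
    ultimately show "AE z in N. pY1 z = pY1_1 z * pD z + pY1_0 z * (1 - pD z)"
      unfolding N_def by (subst AE_distr_iff[OF h]) (auto simp: h_def pY1_def pY1_1_def pY1_0_def pD_def elim!: AE_mp)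
    show "measure N (evD N pD 1) > 0" "measure N (evD N pD 0) > 0"
      using measure_distr[OF h evD_N, folded N_def] pre_evD m by (auto simp: E1_def E0_def)
    show "\<forall>\<iota>\<in>\<I>0. \<forall>d\<in>{0, 1}. measure N (evDI N pD pI0 d \<iota>) > 0"
      using measure_distr[OF h evDI_N, folded N_def] pre_evDI m by auto
    show "integrable N pY1" unfolding N_def
      by (subst integrable_distr_eq[OF h]) (use m in \<open>auto simp: h_def pY1_def\<close>)
    have "integrable M (\<lambda>\<omega>. if D \<omega> = 1 then c else Y1 \<omega>)"
    proof (rule Bochner_Integration.integrable_bound[of M "\<lambda>\<omega>. \<bar>c\<bar> + \<bar>Y1 \<omega>\<bar>"])
      show "integrable M (\<lambda>\<omega>. \<bar>c\<bar> + \<bar>Y1 \<omega>\<bar>)" using m by auto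
      show "(\<lambda>\<omega>. if D \<omega> = 1 then c else Y1 \<omega>) \<in> borel_measurable M" by measurable
      show "AE \<omega> in M. norm (if D \<omega> = 1 then c else Y1 \<omega>) \<le> norm (\<bar>c\<bar> + \<bar>Y1 \<omega>\<bar>)" by auto
    qed
    then show "integrable N pY1_0" unfolding N_def
      by (subst integrable_distr_eq[OF h]) (auto simp: h_def pY1_0_def)
    show "set_integrable N (evD N pD 1) pY1_1" unfolding N_def
      using m pre_evD[unfolded N_def] evD_N[unfolded N_def] integrable_mult_indicator[OF \<open>E1 \<in> sets M\<close>, of Y1]
      by (subst set_integrable_distr[OF h]) (auto simp: h_def pY1_1_def set_integrable_def E1_def
        intro!: integrable_mult_indicator)
    show "\<forall>\<iota>\<in>\<I>0. \<forall>d\<in>{0, 1}. set_integrable N (evDI N pD pI0 d \<iota>) pY0"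
    proof (intro ballI)
      fix \<iota> d assume i: "\<iota> \<in> \<I>0" and d: "d \<in> {0::real, 1}"
      show "set_integrable N (evDI N pD pI0 d \<iota>) pY0"
        using m i d pre_evDI[unfolded N_def] evDI_N[OF i, unfolded N_def] unfolding N_def
        by (subst set_integrable_distr[OF h]) (auto simp: h_def pY0_def)
    qed
  qed
  show ?thesis
    using sN model_N distr_eq BSS_N ATT_eq unfolding J_def by blast
qed


theorem proposition1:
  fixes M :: "'a measure" and MI :: "'i measure"
    and Y0 Y1 D Y1_0 Y1_1 :: "'a \<Rightarrow> real" and I0 :: "'a \<Rightarrow> 'i" and \<I>0 :: "'i set"
  assumes model: "did_model M MI Y0 Y1 D I0 Y1_0 Y1_1 \<I>0"
    and bss: "BSS M Y0 Y1_0 D I0 \<I>0"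
  shows "ATT M Y1_0 Y1_1 D \<in> Theta_I M Y0 Y1 D I0 \<I>0 \<and>
    (\<forall>\<theta>\<in>Theta_I M Y0 Y1 D I0 \<I>0.
       \<exists>N. sets N = sets (joint_space MI) \<and>
           did_model N MI pY0 pY1 pD pI0 pY1_0 pY1_1 \<I>0 \<and>
           distr N (obs_space MI) fst = distr M (obs_space MI) (\<lambda>\<omega>. (Y0 \<omega>, Y1 \<omega>, D \<omega>, I0 \<omega>)) \<and>
           BSS N pY0 pY1_0 pD pI0 \<I>0 \<and>
           ATT N pY1_0 pY1_1 pD = \<theta>)"
  using part1[OF model bss] part2[OF model] by blast

end
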